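(* Let $n\ge 2$, let $\sigma,\tau$ be positive integers with $|\sigma-\tau|\le1$ and $d=\sigma+\tau$, and let $\mathcal{S}$ be the set of all $\mathbf{T}=(T_{p-q})_{p,q=0}^{n-1}\in\mathcal{T}_{n,d}(\mathcal{O}_{\sigma,\tau})$ such that $T_j$ is noninvertible for every $j\neq0$. Then there are no $A,B\in\mathcal{O}_{\sigma,\tau}$ with $\operatorname{Ker}A\cap\operatorname{Ker}B=\{0\}$ such that $\mathcal{S}=\mathcal{F}_{A,B}^{\mathcal{O}_{\sigma,\tau}}$.
   Context: For $\sigma,\tau$ positive integers with $\sigma+\tau=d$, the Schur algebra is $$\mathcal{O}_{\sigma,\tau}=\left\{\begin{pmatrix}\lambda I_\sigma & X\\ 0 & \lambda I_\tau\end{pmatrix} : \lambda\in\mathbb{C},\ X\in\mathcal{M}_{\sigma\times\tau}(\mathbb{C})\right\}\subseteq\mathcal{M}_{d\times d}(\mathbb{C}),$$ written with respect to $\mathbb{C}^d=\mathbb{C}^\sigma\oplus\mathbb{C}^\tau$. For positive integers $n,d$, $\mathcal{T}_{n,d}$ denotes the set of block Toeplitz matrices $\mathbf{T}=(T_{p-q})_{p,q=0}^{n-1}$: $nd\times nd$ complex matrices partitioned into $n\times n$ blocks of size $d\times d$, whose $(p,q)$ block is $T_{p-q}$ for some $T_{-(n-1)},\dots,T_{n-1}\in\mathcal{M}_{d\times d}(\mathbb{C})$. For a subalgebra $\mathcal{B}\subseteq\mathcal{M}_{d\times d}(\mathbb{C})$, $\mathcal{T}_{n,d}(\mathcal{B})$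 is the set of $\mathbf{T}\in\mathcal{T}_{n,d}$ with all $T_j\in\mathcal{B}$. For $A,B\in\mathcal{M}_{d\times d}(\mathbb{C})$, $$\mathcal{F}_{A,B}^{\mathcal{B}}=\{(T_{p-q})_{p,q=0}^{n-1}\in\mathcal{T}_{n,d}(\mathcal{B}) : AT_j=BT_{j-n}\text{ for } j=1,2,\dots,n-1\}.$$ *)

theory Defs
  imports "Jordan_Normal_Form.Matrix_Kernel"
begin

text \<open>Schur algebra O_{sigma,tau}: d x d complex matrices (d = sigma + tau) of the form
  [[lambda I, X],[0, lambda I]] w.r.t. C^d = C^sigma (+) C^tau (indices 0..<sigma first).\<close>
definition schur_alg :: "nat \<Rightarrow> nat \<Rightarrow> complex mat set" where
  "schur_alg \<sigma> \<tau> = {M \<in> carrier_mat (\<sigma> + \<tau>) (\<sigma> + \<tau>).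
     \<exists>c. \<forall>i < \<sigma> + \<tau>. \<forall>j < \<sigma> + \<tau>.
        (i = j \<longrightarrow> M $$ (i, j) = c) \<and>
        (i \<noteq> j \<and> \<not> (i < \<sigma> \<and> \<sigma> \<le> j) \<longrightarrow> M $$ (i, j) = 0)}"

definition block_toeplitz :: "nat \<Rightarrow> nat \<Rightarrow> (int \<Rightarrow> complex mat) \<Rightarrow> complex mat" where
  "block_toeplitz n d T = mat (n * d) (n * d)
     (\<lambda>(i, j). T (int (i div d) - int (j div d)) $$ (i mod d, j mod d))"

definition toeplitz_in :: "nat \<Rightarrow> nat \<Rightarrow> complex mat set \<Rightarrow> complex mat set" where
  "toeplitz_in n d \<B> = {block_toeplitz n d T | T.
     \<forall>j. - (int n - 1) \<le> j \<and> j \<le> int n - 1 \<longrightarrow> T j \<in> \<B> \<and> T j \<in> carrier_mat d d}"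

definition F_set :: "nat \<Rightarrow> nat \<Rightarrow> complex mat set \<Rightarrow> complex mat \<Rightarrow> complex mat \<Rightarrow> complex mat set" where
  "F_set n d \<B> A B = {block_toeplitz n d T | T.
     (\<forall>j. - (int n - 1) \<le> j \<and> j \<le> int n - 1 \<longrightarrow> T j \<in> \<B> \<and> T j \<in> carrier_mat d d) \<and>
     (\<forall>j. 1 \<le> j \<and> j \<le> int n - 1 \<longrightarrow> A * T j = B * T (j - int n))}"

end

theory Submission
  imports Defs
begin

lemma bt_entry:
  assumes "block_toeplitz n d T = block_toeplitz n d T'" "p < n" "q < n" "r < d" "s < d"
  shows "T (int p - int q) $$ (r, s) = T' (int p - int q) $$ (r, s)"
proof -
  have i: "p * d + r < n * d"
  proof -
    have "p * d + r < (p+1) * d" using assms by simp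
    also have "\<dots> \<le> n * d" using assms by (intro mult_right_mono) auto
    finally show ?thesis .
  qed
  have j: "q * d + s < n * d"
  proof -
    have "q * d + s < (q+1) * d" using assms by simp
    also have "\<dots> \<le> n * d" using assms by (intro mult_right_mono) auto
    finally show ?thesis .
  qed
  have "block_toeplitz n d T $$ (p*d+r, q*d+s) = block_toeplitz n d T' $$ (p*d+r, q*d+s)"
    using assms(1) by simp
  thus ?thesis using i j assms by (simp add: block_toeplitz_def)
qed

lemma zero_in_schur: "0\<^sub>m (\<sigma>+\<tau>) (\<sigma>+\<tau>) \<in> schur_alg \<sigma> \<tau>"
  unfolding schur_alg_def by auto

lemma nonzero_not_inv:
  assumes "M \<in> carrier_mat d d" "k < d" "\<forall>j<d. M $$ (k, j) = 0"
  shows "\<not> invertible_mat M"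
proof
  assume "invertible_mat M"
  then obtain B where B: "M * B = 1\<^sub>m d" and B2: "B * M = 1\<^sub>m (dim_row B)" using assms(1)
    unfolding invertible_mat_def inverts_mat_def by auto
  have dc: "dim_col B = d"
  proof -
    have "dim_col (M * B) = d" using B by simp
    thus ?thesis by simp
  qed
  have dr: "dim_row B = d"
  proof -
    have "dim_col (B * M) = dim_row B" using B2 by simp
    thus ?thesis using assms(1) by simp
  qed
  have "(M * B) $$ (k,k) = row M k \<bullet> col B k" using assms dc by simp
  also have "\<dots> = (\<Sum>i\<in>{0..<d}. row M k $ i * col B k $ i)"
    using dr by (simp add: scalar_prod_def)
  also have "\<dots> = 0"
    by (rule sum.neutral) (use assms dc dr in simp)
  finally have "(M * B) $$ (k,k) = 0" .
  moreover have "(M * B) $$ (k,k) = 1" using B assms by simp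
  ultimately show False by simp
qed

lemma schur_kernel:
  assumes "A \<in> schur_alg \<sigma> \<tau>" "A $$ (0,0) = 0" "\<sigma> > 0"
  shows "unit_vec (\<sigma>+\<tau>) 0 \<in> mat_kernel A"
proof -
  from assms(1) obtain c where Ac: "A \<in> carrier_mat (\<sigma>+\<tau>) (\<sigma>+\<tau>)"
    and c: "\<forall>i < \<sigma> + \<tau>. \<forall>j < \<sigma> + \<tau>.
        (i = j \<longrightarrow> A $$ (i, j) = c) \<and>
        (i \<noteq> j \<and> \<not> (i < \<sigma> \<and> \<sigma> \<le> j) \<longrightarrow> A $$ (i, j) = 0)"
    unfolding schur_alg_def by auto
  have c0: "c = 0" using c assms by force
  have col0: "\<forall>i<\<sigma>+\<tau>. A $$ (i,0) = 0"
  proof (intro allI impI)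
    fix i assume i: "i < \<sigma>+\<tau>"
    show "A $$ (i,0) = 0"
    proof (cases "i = 0")
      case True thus ?thesis using c c0 i by auto
    next
      case False
      have z: "0 < \<sigma>+\<tau>" using assms(3) by simp
      show ?thesis using c[rule_format, OF i z] False assms(3) by auto
    qed
  qed
  show ?thesis
  proof (rule mat_kernelI[OF Ac])
    show "unit_vec (\<sigma> + \<tau>) 0 \<in> carrier_vec (\<sigma> + \<tau>)" by simp
    show "A *\<^sub>v unit_vec (\<sigma> + \<tau>) 0 = 0\<^sub>v (\<sigma> + \<tau>)"
    proof (rule eq_vecI)
      fix i assume "i < dim_vec (0\<^sub>v (\<sigma> + \<tau>) :: complex vec)"
      hence i: "i < \<sigma>+\<tau>" by simp
      have "(A *\<^sub>v unit_vec (\<sigma> + \<tau>) 0) $ i = row A i \<bullet> unit_vec (\<sigma> + \<tau>) 0"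
        using Ac i by simp
      also have "\<dots> = A $$ (i, 0)" using Ac i assms(3)
        by (subst scalar_prod_right_unit) auto
      finally show "(A *\<^sub>v unit_vec (\<sigma> + \<tau>) 0) $ i = 0\<^sub>v (\<sigma> + \<tau>) $ i"
        using col0 i by simp
    qed (use Ac in simp)
  qed
qed

lemma mult_N_entry:
  fixes A :: "complex mat"
  assumes "A \<in> carrier_mat d d" "\<sigma> < d"
  shows "(A * mat d d (\<lambda>(i,j). if i = 0 \<and> j = \<sigma> then 1 else 0)) $$ (0,\<sigma>) = A $$ (0,0)"
proof -
  have "(A * mat d d (\<lambda>(i,j). if i = 0 \<and> j = \<sigma> then 1 else 0)) $$ (0,\<sigma>)
     = (\<Sum>k\<in>{0..<d}. A $$ (0,k) * (if k = 0 then 1 else 0))"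
    using assms by (simp add: scalar_prod_def col_def)
  also have "\<dots> = (\<Sum>k\<in>{0..<d}. if k = 0 then A $$ (0,k) else 0)"
    by (rule sum.cong) auto
  also have "\<dots> = A $$ (0,0)" using assms by simp
  finally show ?thesis .
qed

theorem mainTheorem11:
  fixes n \<sigma> \<tau> :: nat
  assumes "n \<ge> 2" and "\<sigma> > 0" and "\<tau> > 0" and "\<bar>int \<sigma> - int \<tau>\<bar> \<le> 1"
  shows "\<not> (\<exists>A B. A \<in> schur_alg \<sigma> \<tau> \<and> B \<in> schur_alg \<sigma> \<tau> \<and>
            mat_kernel A \<inter> mat_kernel B = {0\<^sub>v (\<sigma> + \<tau>)} \<and>
            {block_toeplitz n (\<sigma> + \<tau>) T | T.
               (\<forall>j. - (int n - 1) \<le> j \<and> j \<le> int n - 1 \<longrightarrow>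
                  T j \<in> schur_alg \<sigma> \<tau> \<and> T j \<in> carrier_mat (\<sigma> + \<tau>) (\<sigma> + \<tau>)) \<and>
               (\<forall>j. - (int n - 1) \<le> j \<and> j \<le> int n - 1 \<and> j \<noteq> 0 \<longrightarrow> \<not> invertible_mat (T j))}
            = F_set n (\<sigma> + \<tau>) (schur_alg \<sigma> \<tau>) A B)"
proof
  assume "\<exists>A B. A \<in> schur_alg \<sigma> \<tau> \<and> B \<in> schur_alg \<sigma> \<tau> \<and>
            mat_kernel A \<inter> mat_kernel B = {0\<^sub>v (\<sigma> + \<tau>)} \<and>
            {block_toeplitz n (\<sigma> + \<tau>) T | T.
               (\<forall>j. - (int n - 1) \<le> j \<and> j \<le> int n - 1 \<longrightarrow>
                  T j \<in> schur_alg \<sigma> \<tau> \<and> T j \<in> carrier_mat (\<sigma> + \<tau>) (\<sigma> + \<tau>)) \<and>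
               (\<forall>j. - (int n - 1) \<le> j \<and> j \<le> int n - 1 \<and> j \<noteq> 0 \<longrightarrow> \<not> invertible_mat (T j))}
            = F_set n (\<sigma> + \<tau>) (schur_alg \<sigma> \<tau>) A B"
  then obtain A B where As: "A \<in> schur_alg \<sigma> \<tau>" and Bs: "B \<in> schur_alg \<sigma> \<tau>"
    and ker: "mat_kernel A \<inter> mat_kernel B = {0\<^sub>v (\<sigma> + \<tau>)}"
    and eq: "{block_toeplitz n (\<sigma> + \<tau>) T | T.
               (\<forall>j. - (int n - 1) \<le> j \<and> j \<le> int n - 1 \<longrightarrow>
                  T j \<in> schur_alg \<sigma> \<tau> \<and> T j \<in> carrier_mat (\<sigma> + \<tau>) (\<sigma> + \<tau>)) \<and>
               (\<forall>j. - (int n - 1) \<le> j \<and> j \<le> int n - 1 \<and> j \<noteq> 0 \<longrightarrow> \<not> invertible_mat (T j))}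
            = F_set n (\<sigma> + \<tau>) (schur_alg \<sigma> \<tau>) A B" by blast
  define d where "d = \<sigma> + \<tau>"
  define N :: "complex mat" where "N = mat d d (\<lambda>(i,j). if i = 0 \<and> j = \<sigma> then 1 else 0)"
  have Nc: "N \<in> carrier_mat d d" unfolding N_def by simp
  have Ns: "N \<in> schur_alg \<sigma> \<tau>" unfolding N_def d_def schur_alg_def using assms(2) by auto
  have Nni: "\<not> invertible_mat N"
    by (rule nonzero_not_inv[OF Nc, of "d - 1"]) (use assms in \<open>auto simp: N_def d_def\<close>)
  have Z: "0\<^sub>m d d \<in> schur_alg \<sigma> \<tau>" "0\<^sub>m d d \<in> carrier_mat d d"
    using zero_in_schur d_def by auto
  have Zni: "\<not> invertible_mat (0\<^sub>m d d :: complex mat)"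
    by (rule nonzero_not_inv[OF Z(2), of 0]) (use assms in \<open>auto simp: d_def\<close>)
  have Ac: "A \<in> carrier_mat d d" and Bc: "B \<in> carrier_mat d d"
    using As Bs unfolding schur_alg_def d_def by auto
  have sd: "\<sigma> < d" using assms d_def by simp
  have key: "A * N = B * 0\<^sub>m d d \<and> A * 0\<^sub>m d d = B * N"
  proof -
    {
      fix X Y :: "complex mat"
      assume X: "X \<in> {N, 0\<^sub>m d d}" and Y: "Y \<in> {N, 0\<^sub>m d d}"
      define T where "T = (\<lambda>j::int. if j = 1 then X else if j = 1 - int n then Y else 0\<^sub>m d d)"
      have "block_toeplitz n d T \<in> F_set n d (schur_alg \<sigma> \<tau>) A B"
        unfolding d_def
        apply (subst eq[symmetric])
        apply (rule CollectI, rule exI[of _ T])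
        using X Y Ns Nc Z Nni Zni unfolding T_def d_def by auto
      then obtain T' where bt: "block_toeplitz n d T = block_toeplitz n d T'"
        and T'c: "\<forall>j. - (int n - 1) \<le> j \<and> j \<le> int n - 1 \<longrightarrow> T' j \<in> schur_alg \<sigma> \<tau> \<and> T' j \<in> carrier_mat d d"
        and T'r: "\<forall>j. 1 \<le> j \<and> j \<le> int n - 1 \<longrightarrow> A * T' j = B * T' (j - int n)"
        unfolding F_set_def by blast
      have Xc: "X \<in> carrier_mat d d" and Yc: "Y \<in> carrier_mat d d" using X Y Nc by auto
      have e1: "T' 1 = X"
      proof (rule eq_matI)
        show "dim_row (T' 1) = dim_row X" "dim_col (T' 1) = dim_col X"
          using T'c[rule_format, of 1] Xc assms(1) by auto
        fix i j assume "i < dim_row X" "j < dim_col X"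
        hence ij: "i < d" "j < d" using Xc by auto
        have "T (int 1 - int 0) $$ (i,j) = T' (int 1 - int 0) $$ (i,j)"
          by (rule bt_entry[OF bt]) (use ij assms(1) in auto)
        thus "T' 1 $$ (i, j) = X $$ (i, j)" by (simp add: T_def)
      qed
      have e2: "T' (1 - int n) = Y"
      proof (rule eq_matI)
        show "dim_row (T' (1 - int n)) = dim_row Y" "dim_col (T' (1 - int n)) = dim_col Y"
          using T'c[rule_format, of "1 - int n"] Yc assms(1) by auto
        fix i j assume "i < dim_row Y" "j < dim_col Y"
        hence ij: "i < d" "j < d" using Yc by auto
        have "T (int 0 - int (n-1)) $$ (i,j) = T' (int 0 - int (n-1)) $$ (i,j)"
          by (rule bt_entry[OF bt]) (use ij assms(1) in auto)
        moreover have "int 0 - int (n-1) = 1 - int n" using assms(1) by simp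
        moreover have "1 - int n \<noteq> 1" using assms(1) by simp
        ultimately show "T' (1 - int n) $$ (i, j) = Y $$ (i, j)" by (simp add: T_def)
      qed
      have "A * X = B * Y" using T'r[rule_format, of 1] e1 e2 assms(1) by simp
    }
    thus ?thesis by auto
  qed
  have "A $$ (0,0) = 0"
  proof -
    have "(A * N) $$ (0,\<sigma>) = (B * 0\<^sub>m d d) $$ (0,\<sigma>)" using key by simp
    thus ?thesis using mult_N_entry[OF Ac sd] Bc sd unfolding N_def by simp
  qed
  moreover have "B $$ (0,0) = 0"
  proof -
    have "(B * N) $$ (0,\<sigma>) = (A * 0\<^sub>m d d) $$ (0,\<sigma>)" using key by simp
    thus ?thesis using mult_N_entry[OF Bc sd] Ac sd unfolding N_def by simp
  qed
  ultimately have "unit_vec d 0 \<in> mat_kernel A \<inter> mat_kernel B"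
    using schur_kernel[OF As] schur_kernel[OF Bs] assms(2) d_def by auto
  hence "unit_vec d 0 = (0\<^sub>v d :: complex vec)" using ker d_def by auto
  hence "unit_vec d 0 $ 0 = (0\<^sub>v d :: complex vec) $ 0" by simp
  thus False using sd by simp
qed

end
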